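(* For $\gamma>0$ and an integer $d\geq1$, let $BD(\gamma,d)$ be the birth-and-death process on $\{0,1,2,\ldots\}$ with birth rates $\lambda_n(\gamma,d)$ and death rates $\mu_n(\gamma,d)$, $n\geq1$, given by $$\mu_n(\gamma,d)=\sum_{i=1}^d i\gamma^{i}\binom{d}{i}\binom{n-1}{i-1},\qquad \lambda_n(\gamma,d)=\sum_{i=1}^d i\gamma^{i}\binom{d}{i}\binom{n-1}{i-1}+\gamma\sum_{i=1}^{d-1}(d-i)\gamma^{i}\binom{d}{i}\binom{n-1}{i-1},$$ and with an arbitrary birth rate $\lambda_0>0$ at state $0$. Then $BD(\gamma,d)$ is null-recurrent for $d\leq2$ and transient for $d\geq3$. *)

theory Defs
  imports Complex_Main
begin

(* Recurrence / transience and
   null recurrence are defined through its embedded jump chain, whose transition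
   probabilities are p(i,i+1) = lam i / (lam i + mu i), p(i,i-1) = mu i / (lam i + mu i),
   together with the exponential holding times of mean 1/(lam i + mu i). *)

definition up_prob :: "(nat \<Rightarrow> real) \<Rightarrow> (nat \<Rightarrow> real) \<Rightarrow> nat \<Rightarrow> real" where
  "up_prob lam mu i = lam i / (lam i + mu i)"

(* probability, starting from state i, of hitting state 0 within n jumps *)
fun hit_within :: "(nat \<Rightarrow> real) \<Rightarrow> (nat \<Rightarrow> real) \<Rightarrow> nat \<Rightarrow> nat \<Rightarrow> real" where
  "hit_within lam mu 0 i = (if i = 0 then 1 else 0)"
| "hit_within lam mu (Suc n) i =
     (if i = 0 then 1
      else up_prob lam mu i * hit_within lam mu n (Suc i)
         + (1 - up_prob lam mu i) * hit_within lam mu n (i - 1))"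

(* expected time (in the continuous-time process), starting from state i,
   spent before min(hitting time of 0, n-th jump) *)
fun time_within :: "(nat \<Rightarrow> real) \<Rightarrow> (nat \<Rightarrow> real) \<Rightarrow> nat \<Rightarrow> nat \<Rightarrow> real" where
  "time_within lam mu 0 i = 0"
| "time_within lam mu (Suc n) i =
     (if i = 0 then 0
      else 1 / (lam i + mu i) + up_prob lam mu i * time_within lam mu n (Suc i)
         + (1 - up_prob lam mu i) * time_within lam mu n (i - 1))"

(* probability of ever returning to 0, starting from 0: since mu 0 = 0 the first jump
   goes to 1, after which 0 must be hit *)
definition return_prob :: "(nat \<Rightarrow> real) \<Rightarrow> (nat \<Rightarrow> real) \<Rightarrow> real" where
  "return_prob lam mu = lim (\<lambda>n. hit_within lam mu n 1)"

definition bd_recurrent :: "(nat \<Rightarrow> real) \<Rightarrow> (nat \<Rightarrow> real) \<Rightarrow> bool" where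
  "bd_recurrent lam mu \<longleftrightarrow> return_prob lam mu = 1"

definition bd_transient :: "(nat \<Rightarrow> real) \<Rightarrow> (nat \<Rightarrow> real) \<Rightarrow> bool" where
  "bd_transient lam mu \<longleftrightarrow> return_prob lam mu < 1"

(* mean return time to 0 is 1/lam 0 + E_1[tau_0]; null recurrence: recurrent with
   infinite mean return time, i.e. E_1[tau_0] = sup_n time_within n 1 = infinity *)
definition bd_null_recurrent :: "(nat \<Rightarrow> real) \<Rightarrow> (nat \<Rightarrow> real) \<Rightarrow> bool" where
  "bd_null_recurrent lam mu \<longleftrightarrow>
     bd_recurrent lam mu \<and> \<not> bdd_above (range (\<lambda>n. time_within lam mu n 1))"

definition bd_mu :: "real \<Rightarrow> nat \<Rightarrow> nat \<Rightarrow> real" where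
  "bd_mu \<gamma> d n = (if n = 0 then 0 else
     (\<Sum>i=1..d. real i * \<gamma> ^ i * real (d choose i) * real ((n - 1) choose (i - 1))))"

definition bd_lam :: "real \<Rightarrow> nat \<Rightarrow> real \<Rightarrow> nat \<Rightarrow> real" where
  "bd_lam \<gamma> d l0 n = (if n = 0 then l0 else
     (\<Sum>i=1..d. real i * \<gamma> ^ i * real (d choose i) * real ((n - 1) choose (i - 1)))
     + \<gamma> * (\<Sum>i=1..d-1. real (d - i) * \<gamma> ^ i * real (d choose i) * real ((n - 1) choose (i - 1))))"

end

theory Submission
  imports Defs "HOL-Analysis.Analysis"
begin

definition AA :: "real \<Rightarrow> nat \<Rightarrow> nat \<Rightarrow> real" where
  "AA \<gamma> d m = (\<Sum>j<d. \<gamma> ^ j * real ((d - 1) choose j) * real (m choose j))"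

lemma AA_Suc:
  assumes "d = Suc e"
  shows "AA \<gamma> d (Suc m) = AA \<gamma> d m + (\<Sum>j<e. \<gamma> ^ Suc j * real (e choose Suc j) * real (m choose j))"
proof -
  have "AA \<gamma> d (Suc m) = 1 + (\<Sum>j<e. \<gamma> ^ Suc j * real (e choose Suc j) * real (Suc m choose Suc j))"
    unfolding AA_def assms by (subst sum.lessThan_Suc_shift) simp
  also have "\<dots> = 1 + (\<Sum>j<e. \<gamma> ^ Suc j * real (e choose Suc j) * real (m choose Suc j))
      + (\<Sum>j<e. \<gamma> ^ Suc j * real (e choose Suc j) * real (m choose j))"
    by (simp add: sum.distrib algebra_simps)
  also have "1 + (\<Sum>j<e. \<gamma> ^ Suc j * real (e choose Suc j) * real (m choose Suc j)) = AA \<gamma> d m"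
    unfolding AA_def assms by (subst sum.lessThan_Suc_shift) simp
  finally show ?thesis .
qed

lemma bd_mu_AA:
  assumes "d = Suc e"
  shows "bd_mu \<gamma> d (Suc m) = real d * \<gamma> * AA \<gamma> d m"
proof -
  have "bd_mu \<gamma> d (Suc m) = (\<Sum>j<d. real (Suc j) * \<gamma> ^ Suc j * real (d choose Suc j) * real (m choose j))"
    unfolding bd_mu_def by (simp add: sum.atLeast1_atMost_eq)
  also have "\<dots> = (\<Sum>j<d. real d * \<gamma> * (\<gamma> ^ j * real (e choose j) * real (m choose j)))"
  proof (rule sum.cong)
    fix j
    have "real (Suc j) * real (d choose Suc j) = real d * real (e choose j)"
      using Suc_times_binomial_eq[of e j] assms by (metis mult.commute of_nat_mult)
    note h = this
    have "real (Suc j) * \<gamma> ^ Suc j * real (d choose Suc j) * real (m choose j) =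
          (real (Suc j) * real (d choose Suc j)) * (\<gamma> * \<gamma> ^ j * real (m choose j))"
      by (simp only: power_Suc mult_ac)
    also have "\<dots> = real d * \<gamma> * (\<gamma> ^ j * real (e choose j) * real (m choose j))"
      unfolding h by (simp only: mult_ac)
    finally show "real (Suc j) * \<gamma> ^ Suc j * real (d choose Suc j) * real (m choose j) =
          real d * \<gamma> * (\<gamma> ^ j * real (e choose j) * real (m choose j))" .
  qed simp
  finally show ?thesis unfolding AA_def assms by (simp add: sum_distrib_left del: sum.lessThan_Suc)
qed

lemma bd_lam_AA:
  assumes "d = Suc e"
  shows "bd_lam \<gamma> d l0 (Suc m) = real d * \<gamma> * AA \<gamma> d (Suc m)"
proof -
  have 1: "(\<Sum>i=1..d. real i * \<gamma> ^ i * real (d choose i) * real ((Suc m - 1) choose (i - 1))) = bd_mu \<gamma> d (Suc m)"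
    unfolding bd_mu_def by simp
  have "(\<Sum>i=1..d-1. real (d - i) * \<gamma> ^ i * real (d choose i) * real ((Suc m - 1) choose (i - 1)))
      = (\<Sum>j<e. real (d - Suc j) * \<gamma> ^ Suc j * real (d choose Suc j) * real (m choose j))"
    using assms by (simp add: sum.atLeast1_atMost_eq)
  also have "\<dots> = (\<Sum>j<e. real d * (\<gamma> ^ Suc j * real (e choose Suc j) * real (m choose j)))"
  proof (rule sum.cong)
    fix j
    have "real (d - Suc j) * real (d choose Suc j) = real d * real (e choose Suc j)"
      using binomial_absorb_comp[of d "Suc j"] assms by (metis diff_Suc_1 of_nat_mult)
    note h = this
    have "real (d - Suc j) * \<gamma> ^ Suc j * real (d choose Suc j) * real (m choose j) =
          (real (d - Suc j) * real (d choose Suc j)) * (\<gamma> ^ Suc j * real (m choose j))"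
      by (simp only: mult_ac)
    also have "\<dots> = real d * (\<gamma> ^ Suc j * real (e choose Suc j) * real (m choose j))"
      unfolding h by (simp only: mult_ac)
    finally show "real (d - Suc j) * \<gamma> ^ Suc j * real (d choose Suc j) * real (m choose j) =
          real d * (\<gamma> ^ Suc j * real (e choose Suc j) * real (m choose j))" .
  qed simp
  finally show ?thesis
    unfolding bd_lam_def using 1 bd_mu_AA[OF assms, of \<gamma> m] AA_Suc[OF assms, of \<gamma> m]
    by (simp add: sum_distrib_left algebra_simps)
qed

lemma AA_ge1:
  assumes "\<gamma> > 0" "d \<ge> 1"
  shows "AA \<gamma> d m \<ge> 1"
proof -
  have "AA \<gamma> d m = (\<Sum>j\<in>{..<d}. \<gamma> ^ j * real ((d - 1) choose j) * real (m choose j))" by (simp add: AA_def)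
  also have "\<dots> \<ge> (\<Sum>j\<in>{0}. \<gamma> ^ j * real ((d - 1) choose j) * real (m choose j))"
    by (rule sum_mono2) (use assms in auto)
  finally show ?thesis by simp
qed

lemma AA_mono:
  assumes "\<gamma> > 0" "d \<ge> 1"
  shows "AA \<gamma> d m \<le> AA \<gamma> d (Suc m)"
proof -
  obtain e where "d = Suc e" using assms by (cases d) auto
  then show ?thesis using AA_Suc[of d e \<gamma> m] assms by (simp add: sum_nonneg)
qed

lemma AA_small:
  assumes "\<gamma> > 0" "d \<ge> 1" "d \<le> 2"
  shows "AA \<gamma> d m \<le> 1 + \<gamma> * m"
proof -
  have "d = 1 \<or> d = 2" using assms by auto
  then show ?thesis using assms by (auto simp: AA_def numeral_2_eq_2)
qed

lemma AA_big:
  assumes "\<gamma> > 0" "d \<ge> 3"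
  shows "AA \<gamma> d m \<ge> 1 + \<gamma>^2 * real (m choose 2)"
proof -
  have "AA \<gamma> d m = (\<Sum>j\<in>{..<d}. \<gamma> ^ j * real ((d - 1) choose j) * real (m choose j))" by (simp add: AA_def)
  also have "\<dots> \<ge> (\<Sum>j\<in>{0,2}. \<gamma> ^ j * real ((d - 1) choose j) * real (m choose j))"
    by (rule sum_mono2) (use assms in auto)
  finally have "AA \<gamma> d m \<ge> 1 + \<gamma>^2 * real ((d - 1) choose 2) * real (m choose 2)" by simp
  moreover have "((d - 1) choose 2) \<ge> 1" using assms by (simp add: Suc_le_eq)
  moreover have "\<gamma>^2 * real (m choose 2) \<ge> 0" by simp
  moreover have "\<gamma>^2 * real (m choose 2) * 1 \<le> \<gamma>^2 * real (m choose 2) * real ((d - 1) choose 2)"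
    by (rule mult_left_mono) (use calculation in auto)
  ultimately show ?thesis by (simp add: mult_ac)
qed

lemma hit_bounds:
  assumes P: "\<And>i. i > 0 \<Longrightarrow> 0 \<le> up_prob lam mu i \<and> up_prob lam mu i \<le> 1"
  shows "0 \<le> hit_within lam mu n i \<and> hit_within lam mu n i \<le> 1"
proof (induction n arbitrary: i)
  case 0 then show ?case by simp
next
  case (Suc n)
  show ?case
  proof (cases "i = 0")
    case True then show ?thesis by simp
  next
    case False
    define q where "q = up_prob lam mu i"
    define x where "x = hit_within lam mu n (Suc i)"
    define y where "y = hit_within lam mu n (i - 1)"
    have q: "0 \<le> q" "q \<le> 1" using P[of i] False by (auto simp: q_def)
    have x: "0 \<le> x" "x \<le> 1" using Suc[of "Suc i"] by (auto simp: x_def)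
    have y: "0 \<le> y" "y \<le> 1" using Suc[of "i - 1"] by (auto simp: y_def)
    have "q * x \<le> q" using mult_left_mono[of x 1 q] q x by simp
    moreover have "(1 - q) * y \<le> (1 - q)" using mult_left_mono[of y 1 "1 - q"] q y by simp
    moreover have "0 \<le> q * x" using q x by simp
    moreover have "0 \<le> (1 - q) * y" using q y by simp
    ultimately have "0 \<le> q * x + (1 - q) * y \<and> q * x + (1 - q) * y \<le> 1" by linarith
    moreover have "hit_within lam mu (Suc n) i = q * x + (1 - q) * y"
      using False unfolding q_def x_def y_def by simp
    ultimately show ?thesis by simp
  qed
qed

lemma hit_mono:
  assumes P: "\<And>i. i > 0 \<Longrightarrow> 0 \<le> up_prob lam mu i \<and> up_prob lam mu i \<le> 1"
  shows "hit_within lam mu n i \<le> hit_within lam mu (Suc n) i"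
proof (induction n arbitrary: i)
  case 0 then show ?case using hit_bounds[OF P, of "Suc 0" i] by auto
next
  case (Suc n)
  show ?case
  proof (cases "i = 0")
    case True then show ?thesis by simp
  next
    case False
    have q: "0 \<le> up_prob lam mu i" "0 \<le> 1 - up_prob lam mu i" using P[of i] False by auto
    have e1: "hit_within lam mu (Suc n) i = 0 + up_prob lam mu i * hit_within lam mu n (Suc i) + (1 - up_prob lam mu i) * hit_within lam mu n (i - 1)"
      using False by simp
    have e2: "hit_within lam mu (Suc (Suc n)) i = 0 + up_prob lam mu i * hit_within lam mu (Suc n) (Suc i) + (1 - up_prob lam mu i) * hit_within lam mu (Suc n) (i - 1)"
      using False by (simp del: hit_within.simps(2) add: hit_within.simps(2)[of _ _ "Suc n"])
    have m1: "up_prob lam mu i * hit_within lam mu n (Suc i) \<le> up_prob lam mu i * hit_within lam mu (Suc n) (Suc i)"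
      using mult_left_mono[OF Suc.IH[of "Suc i"] q(1)] .
    have m2: "(1 - up_prob lam mu i) * hit_within lam mu n (i - 1) \<le> (1 - up_prob lam mu i) * hit_within lam mu (Suc n) (i - 1)"
      using mult_left_mono[OF Suc.IH[of "i - 1"] q(2)] .
    show ?thesis unfolding e1 e2 using m1 m2 by linarith
  qed
qed

lemma hit_limit:
  assumes P: "\<And>i. i > 0 \<Longrightarrow> 0 \<le> up_prob lam mu i \<and> up_prob lam mu i \<le> 1"
  defines "H \<equiv> \<lambda>i. SUP n. hit_within lam mu n i"
  shows "(\<lambda>n. hit_within lam mu n i) \<longlonglongrightarrow> H i"
  unfolding H_def
  by (rule LIMSEQ_incseq_SUP) (use hit_bounds[OF P] hit_mono[OF P] in \<open>auto intro!: incseq_SucI simp: bdd_above_def\<close>)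

lemma lim_harmonic:
  fixes f :: "nat \<Rightarrow> nat \<Rightarrow> real"
  assumes lim: "\<And>i. (\<lambda>n. f n i) \<longlonglongrightarrow> F i"
    and rec: "\<And>n. f (Suc n) i = c + q * f n (Suc i) + (1 - q) * f n (i - 1)"
  shows "F i = c + q * F (Suc i) + (1 - q) * F (i - 1)"
proof -
  have "(\<lambda>n. f (Suc n) i) \<longlonglongrightarrow> F i" using lim[of i] by (rule LIMSEQ_Suc)
  moreover have "(\<lambda>n. f (Suc n) i) \<longlonglongrightarrow> c + q * F (Suc i) + (1 - q) * F (i - 1)"
    unfolding rec by (intro tendsto_intros lim)
  ultimately show ?thesis by (rule LIMSEQ_unique)
qed

lemma time_nonneg:
  assumes P: "\<And>i. i > 0 \<Longrightarrow> 0 \<le> up_prob lam mu i \<and> up_prob lam mu i \<le> 1"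
    and S: "\<And>i. i > 0 \<Longrightarrow> lam i + mu i > 0"
  shows "0 \<le> time_within lam mu n i"
proof (induction n arbitrary: i)
  case 0 then show ?case by simp
next
  case (Suc n)
  show ?case
  proof (cases "i = 0")
    case True then show ?thesis by simp
  next
    case False
    have q: "0 \<le> up_prob lam mu i" "0 \<le> 1 - up_prob lam mu i" using P[of i] False by auto
    have "0 \<le> 1 / (lam i + mu i)" using S[of i] False by simp
    then show ?thesis using False q Suc
      by (simp only: time_within.simps if_False) (intro add_nonneg_nonneg mult_nonneg_nonneg)
  qed
qed

lemma time_mono:
  assumes P: "\<And>i. i > 0 \<Longrightarrow> 0 \<le> up_prob lam mu i \<and> up_prob lam mu i \<le> 1"
    and S: "\<And>i. i > 0 \<Longrightarrow> lam i + mu i > 0"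
  shows "time_within lam mu n i \<le> time_within lam mu (Suc n) i"
proof (induction n arbitrary: i)
  case 0 then show ?case using time_nonneg[OF P S, of "Suc 0" i] by auto
next
  case (Suc n)
  show ?case
  proof (cases "i = 0")
    case True then show ?thesis by simp
  next
    case False
    have q: "0 \<le> up_prob lam mu i" "0 \<le> 1 - up_prob lam mu i" using P[of i] False by auto
    have e1: "time_within lam mu (Suc n) i = 1 / (lam i + mu i) + up_prob lam mu i * time_within lam mu n (Suc i) + (1 - up_prob lam mu i) * time_within lam mu n (i - 1)"
      using False by simp
    have e2: "time_within lam mu (Suc (Suc n)) i = 1 / (lam i + mu i) + up_prob lam mu i * time_within lam mu (Suc n) (Suc i) + (1 - up_prob lam mu i) * time_within lam mu (Suc n) (i - 1)"
      using False by (simp del: time_within.simps(2) add: time_within.simps(2)[of _ _ "Suc n"])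
    have m1: "up_prob lam mu i * time_within lam mu n (Suc i) \<le> up_prob lam mu i * time_within lam mu (Suc n) (Suc i)"
      using mult_left_mono[OF Suc.IH[of "Suc i"] q(1)] .
    have m2: "(1 - up_prob lam mu i) * time_within lam mu n (i - 1) \<le> (1 - up_prob lam mu i) * time_within lam mu (Suc n) (i - 1)"
      using mult_left_mono[OF Suc.IH[of "i - 1"] q(2)] .
    show ?thesis unfolding e1 e2 using m1 m2 by linarith
  qed
qed

lemma time_bounded_all:
  assumes P: "\<And>i. i > 0 \<Longrightarrow> 0 < up_prob lam mu i \<and> up_prob lam mu i \<le> 1"
    and S: "\<And>i. i > 0 \<Longrightarrow> lam i + mu i > 0"
    and B: "\<And>n. time_within lam mu n 1 \<le> B"
  shows "\<exists>C. \<forall>n. time_within lam mu n (Suc k) \<le> C"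
proof (induction k)
  case 0 then show ?case using B by (intro exI[of _ B]) simp
next
  case (Suc k)
  then obtain C where C: "\<And>n. time_within lam mu n (Suc k) \<le> C" by auto
  have P': "\<And>i. i > 0 \<Longrightarrow> 0 \<le> up_prob lam mu i \<and> up_prob lam mu i \<le> 1" using P less_imp_le by blast
  define q where "q = up_prob lam mu (Suc k)"
  have q: "0 < q" "q \<le> 1" using P[of "Suc k"] by (auto simp: q_def)
  have "time_within lam mu n (Suc (Suc k)) \<le> C / q" for n
  proof -
    have e: "time_within lam mu (Suc n) (Suc k) = 1 / (lam (Suc k) + mu (Suc k))
       + q * time_within lam mu n (Suc (Suc k)) + (1 - q) * time_within lam mu n k"
      by (simp add: q_def)
    have a: "0 \<le> 1 / (lam (Suc k) + mu (Suc k))" using S[of "Suc k"] by simp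
    have b: "0 \<le> (1 - q) * time_within lam mu n k"
      using time_nonneg[OF P' S, of n k] q by simp
    have "q * time_within lam mu n (Suc (Suc k)) \<le> time_within lam mu (Suc n) (Suc k)"
      unfolding e using a b by linarith
    also have "\<dots> \<le> C" by (rule C)
    finally show ?thesis using q by (simp add: pos_le_divide_eq mult.commute)
  qed
  then show ?case by blast
qed
lemma AA_0: assumes "d \<ge> 1" shows "AA \<gamma> d 0 = 1"
proof -
  obtain e where d: "d = Suc e" using assms by (cases d) auto
  show ?thesis unfolding AA_def d by (simp add: sum.lessThan_Suc_shift del: sum.lessThan_Suc)
qed

lemma rates:
  assumes "d \<ge> 1" "i > 0"
  shows "bd_lam \<gamma> d l0 i = real d * \<gamma> * AA \<gamma> d i \<and> bd_mu \<gamma> d i = real d * \<gamma> * AA \<gamma> d (i - 1)"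
proof -
  obtain e where d: "d = Suc e" using assms by (cases d) auto
  obtain m where i: "i = Suc m" using assms by (cases i) auto
  show ?thesis using bd_lam_AA[OF d, of \<gamma> l0 m] bd_mu_AA[OF d, of \<gamma> m] i by simp
qed

lemma up_eq:
  assumes "\<gamma> > 0" "d \<ge> 1" "i > 0"
  shows "up_prob (bd_lam \<gamma> d l0) (bd_mu \<gamma> d) i = AA \<gamma> d i / (AA \<gamma> d i + AA \<gamma> d (i - 1))"
proof -
  have c: "real d * \<gamma> > 0" using assms by simp
  show ?thesis unfolding up_prob_def using rates[OF assms(2,3), of \<gamma> l0] c assms
    by (simp add: distrib_left[symmetric])
qed

lemma sum_rates:
  assumes "\<gamma> > 0" "d \<ge> 1" "i > 0"
  shows "bd_lam \<gamma> d l0 i + bd_mu \<gamma> d i = real d * \<gamma> * (AA \<gamma> d i + AA \<gamma> d (i - 1))"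
  using rates[OF assms(2,3), of \<gamma> l0] by (simp add: distrib_left)

lemma up_bounds:
  assumes "\<gamma> > 0" "d \<ge> 1" "i > 0"
  shows "0 < up_prob (bd_lam \<gamma> d l0) (bd_mu \<gamma> d) i \<and> up_prob (bd_lam \<gamma> d l0) (bd_mu \<gamma> d) i \<le> 1"
proof -
  have a: "AA \<gamma> d i \<ge> 1" "AA \<gamma> d (i - 1) \<ge> 1" using AA_ge1 assms by auto
  show ?thesis unfolding up_eq[OF assms] using a by (simp add: divide_le_eq)
qed

lemma sum_rates_pos:
  assumes "\<gamma> > 0" "d \<ge> 1" "i > 0"
  shows "bd_lam \<gamma> d l0 i + bd_mu \<gamma> d i > 0"
proof -
  have a: "AA \<gamma> d i \<ge> 1" "AA \<gamma> d (i - 1) \<ge> 1" using AA_ge1 assms by auto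
  show ?thesis unfolding sum_rates[OF assms] using a assms by simp
qed

lemma harm_step:
  fixes a b X H Y :: real
  assumes "a > 0" "b > 0" "H = c + a / (a + b) * X + (1 - a / (a + b)) * Y"
  shows "a * (X - H) = b * (H - Y) - c * (a + b)"
proof -
  have s: "a + b > 0" using assms by simp
  have e1: "(a + b) * (a / (a + b)) = a" using s by simp
  have e2: "(a + b) * (1 - a / (a + b)) = b" using s by (simp add: field_simps)
  have "(a + b) * H = (a + b) * c + ((a + b) * (a / (a + b))) * X + ((a + b) * (1 - a / (a + b))) * Y"
    unfolding assms(3) by (simp add: algebra_simps)
  then have "(a + b) * H = c * (a + b) + a * X + b * Y" unfolding e1 e2 by (simp add: algebra_simps)
  then show ?thesis by (simp add: algebra_simps)
qed

lemma H_props: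
  fixes l0 :: real
  assumes g: "\<gamma> > 0" and d: "d \<ge> 1"
    and H_def: "H = (\<lambda>i. SUP n. hit_within (bd_lam \<gamma> d l0) (bd_mu \<gamma> d) n i)"
  shows "\<And>i. (\<lambda>n. hit_within (bd_lam \<gamma> d l0) (bd_mu \<gamma> d) n i) \<longlonglongrightarrow> H i"
    and "H 0 = 1" and "\<And>i. 0 \<le> H i \<and> H i \<le> 1"
    and "\<And>N. H N = 1 - (1 - H 1) * (\<Sum>k<N. 1 / AA \<gamma> d k)"
proof -
  let ?lam = "bd_lam \<gamma> d l0" and ?mu = "bd_mu \<gamma> d"
  let ?A = "AA \<gamma> d"
  have P: "\<And>i. i > 0 \<Longrightarrow> 0 \<le> up_prob ?lam ?mu i \<and> up_prob ?lam ?mu i \<le> 1"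
    using up_bounds[OF g d] less_imp_le by blast
  show lim: "\<And>i. (\<lambda>n. hit_within ?lam ?mu n i) \<longlonglongrightarrow> H i"
    unfolding H_def by (rule hit_limit[OF P])
  have h0: "hit_within ?lam ?mu n 0 = 1" for n by (cases n) auto
  show H0: "H 0 = 1"
    using LIMSEQ_unique[OF lim[of 0]] h0 by simp
  show Hb: "0 \<le> H i \<and> H i \<le> 1" for i
  proof
    show "0 \<le> H i" by (rule LIMSEQ_le_const[OF lim[of i]]) (use hit_bounds[OF P] in auto)
    show "H i \<le> 1" by (rule LIMSEQ_le_const2[OF lim[of i]]) (use hit_bounds[OF P] in auto)
  qed
  have step: "?A (Suc k) * (H (Suc k) - H (Suc (Suc k))) = ?A k * (H k - H (Suc k))" for k
  proof -
    have rec: "hit_within ?lam ?mu (Suc n) (Suc k) = 0 + up_prob ?lam ?mu (Suc k) * hit_within ?lam ?mu n (Suc (Suc k))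
      + (1 - up_prob ?lam ?mu (Suc k)) * hit_within ?lam ?mu n (Suc k - 1)" for n
      by simp
    have "H (Suc k) = 0 + up_prob ?lam ?mu (Suc k) * H (Suc (Suc k)) + (1 - up_prob ?lam ?mu (Suc k)) * H (Suc k - 1)"
      by (rule lim_harmonic[OF lim rec])
    then have "H (Suc k) = 0 + ?A (Suc k) / (?A (Suc k) + ?A k) * H (Suc (Suc k)) + (1 - ?A (Suc k) / (?A (Suc k) + ?A k)) * H k"
      using up_eq[OF g d, of "Suc k" l0] by simp
    from harm_step[OF _ _ this] AA_ge1[OF g d, of k] AA_ge1[OF g d, of "Suc k"]
    show ?thesis by (simp add: algebra_simps)
  qed
  have const: "?A k * (H k - H (Suc k)) = 1 - H 1" for k
  proof (induction k)
    case 0 then show ?case using H0 AA_0[OF d, of \<gamma>] by simp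
  next
    case (Suc k) then show ?case using step[of k] by simp
  qed
  show "H N = 1 - (1 - H 1) * (\<Sum>k<N. 1 / ?A k)" for N
  proof (induction N)
    case 0 then show ?case using H0 by simp
  next
    case (Suc N)
    have "H (Suc N) = H N - (1 - H 1) / ?A N"
      using const[of N] AA_ge1[OF g d, of N] by (simp add: field_simps)
    then show ?case using Suc by (simp add: algebra_simps add_divide_distrib)
  qed
qed

lemma recurrent_small:
  fixes l0 :: real
  assumes g: "\<gamma> > 0" and d: "d \<ge> 1" and d2: "d \<le> 2"
  shows "bd_recurrent (bd_lam \<gamma> d l0) (bd_mu \<gamma> d)"
proof -
  define H where "H = (\<lambda>i. SUP n. hit_within (bd_lam \<gamma> d l0) (bd_mu \<gamma> d) n i)"
  note Hp = H_props[OF g d H_def]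
  let ?A = "AA \<gamma> d"
  have H1: "H 1 = 1"
  proof (rule ccontr)
    assume "H 1 \<noteq> 1"
    then have dpos: "1 - H 1 > 0" using Hp(3)[of 1] by simp
    have bound: "(\<Sum>k<N. 1 / ?A k) \<le> 1 / (1 - H 1)" for N
    proof -
      have "0 \<le> H N" using Hp(3) by simp
      then have "(1 - H 1) * (\<Sum>k<N. 1 / ?A k) \<le> 1" using Hp(4)[of N] by simp
      then show ?thesis using dpos by (simp add: pos_le_divide_eq mult.commute)
    qed
    have nn: "0 \<le> 1 / ?A k" for k using AA_ge1[OF g d, of k] by simp
    have summ: "summable (\<lambda>k. 1 / ?A k)"
      by (rule summableI_nonneg_bounded[OF nn bound])
    have cmp: "norm (inverse (real (Suc k))) \<le> (1 + \<gamma>) * (1 / ?A k)" for k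
    proof -
      have a1: "?A k \<ge> 1" using AA_ge1[OF g d] by simp
      have "?A k \<le> 1 + \<gamma> * real k" by (rule AA_small[OF g d d2])
      also have "\<dots> \<le> (1 + \<gamma>) * real (Suc k)" using g by (simp add: algebra_simps)
      finally have le: "?A k \<le> (1 + \<gamma>) * real (Suc k)" .
      have "inverse (real (Suc k)) = 1 / real (Suc k)" by (simp add: inverse_eq_divide)
      also have "\<dots> \<le> (1 + \<gamma>) / ?A k"
        using le a1 g by (simp add: divide_simps)
      finally show ?thesis by simp
    qed
    have "summable (\<lambda>k. inverse (real (Suc k)))"
      by (rule summable_comparison_test[OF _ summable_mult[OF summ]]) (use cmp in blast)
    then have "summable (\<lambda>k. inverse (real k))" by (subst (asm) summable_Suc_iff)
    then show False using not_summable_harmonic by blast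
  qed
  have "return_prob (bd_lam \<gamma> d l0) (bd_mu \<gamma> d) = H 1"
    unfolding return_prob_def by (rule limI[OF Hp(1)])
  then show ?thesis unfolding bd_recurrent_def using H1 by simp
qed

lemma choose2_real: "2 * real (k choose 2) = real k * real k - real k"
  by (induction k) (simp_all add: numeral_2_eq_2 algebra_simps)

lemma harm_G:
  fixes a b y :: real
  assumes "0 < b" "0 < a"
  shows "y = a / (a + b) * (y - 1 / a) + (1 - a / (a + b)) * (y + 1 / b)"
proof -
  have s: "a + b \<noteq> 0" "a \<noteq> 0" "b \<noteq> 0" using assms by simp_all
  have 1: "a / (a + b) * (y - 1 / a) = (a * y - 1) / (a + b)"
  proof -
    have "y - 1 / a = (a * y - 1) / a" using s by (simp add: diff_divide_distrib)
    then show ?thesis using s by simp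
  qed
  have 2: "1 - a / (a + b) = b / (a + b)" using s by (simp add: field_simps)
  have 3: "b / (a + b) * (y + 1 / b) = (b * y + 1) / (a + b)"
  proof -
    have "y + 1 / b = (b * y + 1) / b" using s by (simp add: add_divide_distrib)
    then show ?thesis using s by simp
  qed
  have "(a * y - 1) / (a + b) + (b * y + 1) / (a + b) = ((a + b) * y) / (a + b)"
    by (simp add: add_divide_distrib[symmetric] algebra_simps)
  also have "\<dots> = y" using s by simp
  finally have 4: "(a * y - 1) / (a + b) + (b * y + 1) / (a + b) = y" .
  show ?thesis unfolding 1 2 3 4 ..
qed

lemma transient_big:
  fixes l0 :: real
  assumes g: "\<gamma> > 0" and d3: "d \<ge> 3"
  shows "bd_transient (bd_lam \<gamma> d l0) (bd_mu \<gamma> d)"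
proof -
  have d: "d \<ge> 1" using d3 by simp
  let ?lam = "bd_lam \<gamma> d l0" and ?mu = "bd_mu \<gamma> d"
  let ?A = "AA \<gamma> d"
  define \<rho> where "\<rho> = (\<lambda>k. 1 / ?A k)"
  have a1: "\<And>k. ?A k \<ge> 1" using AA_ge1[OF g d] by simp
  have \<rho>nn: "0 \<le> \<rho> k" for k
  proof -
    have "0 \<le> ?A k" using a1[of k] by linarith
    then show ?thesis by (simp add: \<rho>_def)
  qed
  define M where "M = 4 + 8 / \<gamma>^2"
  have cmp: "norm (\<rho> k) \<le> M * inverse (real (Suc k) ^ 2)" for k
  proof -
    define x where "x = real k"
    have ch: "2 * real (k choose 2) = x * x - x" using choose2_real[of k] by (simp add: x_def)
    have Ab: "?A k \<ge> 1 + \<gamma>^2 * real (k choose 2)" by (rule AA_big[OF g d3])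
    have Mg: "M * \<gamma>^2 = 4 * \<gamma>^2 + 8" using g by (simp add: M_def field_simps)
    have Mpos: "M > 0" using g by (simp add: M_def add_pos_nonneg)
    have c0: "real (k choose 2) \<ge> 0" by simp
    have "M * ?A k \<ge> M * (1 + \<gamma>^2 * real (k choose 2))"
      using Ab Mpos by simp
    also have "M * (1 + \<gamma>^2 * real (k choose 2)) = M + (M * \<gamma>^2) * real (k choose 2)"
      by (simp add: algebra_simps)
    also have "\<dots> = M + (4 * \<gamma>^2 + 8) * real (k choose 2)"
      unfolding Mg ..
    also have "\<dots> \<ge> 4 + 8 * real (k choose 2)"
      using c0 g by (simp add: M_def add_increasing mult_right_mono)
    finally have f: "M * ?A k \<ge> 4 + 8 * real (k choose 2)" .
    have "4 + 4 * (x * x - x) = 4 + 8 * real (k choose 2)" using ch by simp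
    then have "M * ?A k \<ge> 4 + 4 * (x * x - x)" using f by linarith
    moreover have "4 + 4 * (x * x - x) \<ge> (x + 1)^2"
    proof -
      have "0 \<le> 3 * (x - 1)^2" by simp
      then show ?thesis by (simp add: power2_eq_square algebra_simps)
    qed
    ultimately have le: "(x + 1)^2 \<le> M * ?A k" by linarith
    have pos: "(x + 1)^2 > 0" by (simp add: x_def)
    have "\<rho> k = 1 / ?A k" by (simp add: \<rho>_def)
    also have "\<dots> \<le> M / (x + 1)^2"
      using le pos a1[of k] by (simp add: divide_simps mult.commute)
    finally show ?thesis using \<rho>nn[of k] by (simp add: x_def inverse_eq_divide add.commute)
  qed
  have "summable (\<lambda>k. inverse (real k ^ 2))" by (rule inverse_power_summable) simp
  then have s2: "summable (\<lambda>k. inverse (real (Suc k) ^ 2))" by (subst summable_Suc_iff)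
  have summ: "summable \<rho>"
    by (rule summable_comparison_test[OF _ summable_mult[OF s2]]) (use cmp in blast)
  define G where "G = (\<lambda>i. \<Sum>k. \<rho> (k + i))"
  have Gsum: "\<And>i. summable (\<lambda>k. \<rho> (k + i))" using summ by simp
  have Gnn: "\<And>i. 0 \<le> G i" unfolding G_def using Gsum \<rho>nn by (simp add: suminf_nonneg)
  have Gstep: "G i = G (Suc i) + \<rho> i" for i
    using suminf_split_head[OF Gsum[of i]] by (simp add: G_def)
  define S where "S = G 0"
  have S1: "S \<ge> 1" using Gstep[of 0] Gnn[of 1] a1[of 0] AA_0[OF d, of \<gamma>] by (simp add: S_def \<rho>_def)
  have Gharm: "G (Suc k) = ?A (Suc k) / (?A (Suc k) + ?A k) * G (Suc (Suc k))
      + (1 - ?A (Suc k) / (?A (Suc k) + ?A k)) * G k" for k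
  proof -
    have e1: "G k = G (Suc k) + 1 / ?A k" using Gstep[of k] by (simp add: \<rho>_def)
    have e2: "G (Suc (Suc k)) = G (Suc k) - 1 / ?A (Suc k)" using Gstep[of "Suc k"] by (simp add: \<rho>_def)
    have "0 < ?A k" "0 < ?A (Suc k)" using a1[of k] a1[of "Suc k"] by linarith+
    then show ?thesis unfolding e1 e2 by (rule harm_G)
  qed
  have P: "\<And>i. i > 0 \<Longrightarrow> 0 \<le> up_prob ?lam ?mu i \<and> up_prob ?lam ?mu i \<le> 1"
    using up_bounds[OF g d] less_imp_le by blast
  have hle: "hit_within ?lam ?mu n i \<le> G i / S" for n i
  proof (induction n arbitrary: i)
    case 0 then show ?case using Gnn[of i] S1 by (simp add: S_def)
  next
    case (Suc n)
    show ?case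
    proof (cases "i = 0")
      case True then show ?thesis using S1 by (simp add: S_def)
    next
      case False
      then obtain k where k: "i = Suc k" by (cases i) auto
      define q where "q = up_prob ?lam ?mu i"
      have q: "0 \<le> q" "0 \<le> 1 - q" using P[of i] False by (auto simp: q_def)
      have qe: "q = ?A (Suc k) / (?A (Suc k) + ?A k)" using up_eq[OF g d, of i l0] k by (simp add: q_def)
      have e: "hit_within ?lam ?mu (Suc n) i = q * hit_within ?lam ?mu n (Suc (Suc k)) + (1 - q) * hit_within ?lam ?mu n k"
        unfolding q_def k by simp
      have "q * hit_within ?lam ?mu n (Suc (Suc k)) \<le> q * (G (Suc (Suc k)) / S)"
        using mult_left_mono[OF Suc.IH q(1)] .
      moreover have "(1 - q) * hit_within ?lam ?mu n k \<le> (1 - q) * (G k / S)"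
        using mult_left_mono[OF Suc.IH q(2)] .
      moreover have "q * (G (Suc (Suc k)) / S) + (1 - q) * (G k / S) = G i / S"
      proof -
        have "q * (G (Suc (Suc k)) / S) + (1 - q) * (G k / S) = (q * G (Suc (Suc k)) + (1 - q) * G k) / S"
          by (simp add: add_divide_distrib)
        also have "q * G (Suc (Suc k)) + (1 - q) * G k = G i"
          unfolding k qe by (rule Gharm[symmetric])
        finally show ?thesis .
      qed
      ultimately show ?thesis unfolding e by linarith
    qed
  qed
  have lim: "(\<lambda>n. hit_within ?lam ?mu n 1) \<longlonglongrightarrow> (SUP n. hit_within ?lam ?mu n 1)"
    by (rule hit_limit[OF P])
  have "return_prob ?lam ?mu = (SUP n. hit_within ?lam ?mu n 1)"
    unfolding return_prob_def by (rule limI[OF lim])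
  also have "\<dots> \<le> G 1 / S"
    by (rule LIMSEQ_le_const2[OF lim]) (use hle in auto)
  also have "G 1 / S < 1"
  proof -
    have "G 1 = S - 1" using Gstep[of 0] AA_0[OF d, of \<gamma>] by (simp add: S_def \<rho>_def)
    then show ?thesis using S1 by simp
  qed
  finally show ?thesis unfolding bd_transient_def .
qed

lemma time_unbounded:
  fixes l0 :: real
  assumes g: "\<gamma> > 0" and d: "d \<ge> 1" and d2: "d \<le> 2"
  shows "\<not> bdd_above (range (\<lambda>n. time_within (bd_lam \<gamma> d l0) (bd_mu \<gamma> d) n 1))"
proof
  let ?lam = "bd_lam \<gamma> d l0" and ?mu = "bd_mu \<gamma> d"
  let ?A = "AA \<gamma> d"
  let ?t = "time_within ?lam ?mu"
  define c where "c = real d * \<gamma>"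
  have c: "c > 0" using g d by (simp add: c_def)
  have a1: "\<And>k. ?A k \<ge> 1" using AA_ge1[OF g d] by simp
  assume "bdd_above (range (\<lambda>n. ?t n 1))"
  then obtain B where B: "\<And>n. ?t n 1 \<le> B" by (auto simp: bdd_above_def)
  have P2: "\<And>i. i > 0 \<Longrightarrow> 0 < up_prob ?lam ?mu i \<and> up_prob ?lam ?mu i \<le> 1"
    using up_bounds[OF g d] by blast
  have P: "\<And>i. i > 0 \<Longrightarrow> 0 \<le> up_prob ?lam ?mu i \<and> up_prob ?lam ?mu i \<le> 1"
    using P2 less_imp_le by blast
  have Spos: "\<And>i. i > 0 \<Longrightarrow> ?lam i + ?mu i > 0" using sum_rates_pos[OF g d] by blast
  have t0: "?t n 0 = 0" for n by (cases n) auto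
  have bnd: "\<exists>C. \<forall>n. ?t n i \<le> C" for i
  proof (cases i)
    case 0 then show ?thesis using t0 by auto
  next
    case (Suc k) then show ?thesis using time_bounded_all[OF P2 Spos B, of k] by simp
  qed
  define T where "T = (\<lambda>i. SUP n. ?t n i)"
  have lim: "(\<lambda>n. ?t n i) \<longlonglongrightarrow> T i" for i
  proof -
    obtain C where C: "\<forall>n. ?t n i \<le> C" using bnd by blast
    show ?thesis unfolding T_def
      by (rule LIMSEQ_incseq_SUP) (use C time_mono[OF P Spos] in \<open>auto intro!: incseq_SucI simp: bdd_above_def\<close>)
  qed
  have T0: "T 0 = 0" using LIMSEQ_unique[OF lim[of 0]] t0 by simp
  have Tnn: "0 \<le> T i" for i
    by (rule LIMSEQ_le_const[OF lim[of i]]) (use time_nonneg[OF P Spos] in auto)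
  have step: "?A (Suc k) * (T (Suc (Suc k)) - T (Suc k)) = ?A k * (T (Suc k) - T k) - 1 / c" for k
  proof -
    define a where "a = ?A (Suc k)"
    define b where "b = ?A k"
    have ab: "a > 0" "b > 0" using a1[of k] a1[of "Suc k"] by (simp_all add: a_def b_def)
    have rec: "?t (Suc n) (Suc k) = 1 / (?lam (Suc k) + ?mu (Suc k)) + up_prob ?lam ?mu (Suc k) * ?t n (Suc (Suc k))
      + (1 - up_prob ?lam ?mu (Suc k)) * ?t n (Suc k - 1)" for n
      by simp
    have "T (Suc k) = 1 / (?lam (Suc k) + ?mu (Suc k)) + up_prob ?lam ?mu (Suc k) * T (Suc (Suc k)) + (1 - up_prob ?lam ?mu (Suc k)) * T (Suc k - 1)"
      by (rule lim_harmonic[OF lim rec])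
    then have "T (Suc k) = 1 / (c * (a + b)) + a / (a + b) * T (Suc (Suc k)) + (1 - a / (a + b)) * T k"
      using up_eq[OF g d, of "Suc k" l0] sum_rates[OF g d, of "Suc k" l0] by (simp add: a_def b_def c_def)
    from harm_step[OF ab this]
    have "a * (T (Suc (Suc k)) - T (Suc k)) = b * (T (Suc k) - T k) - 1 / (c * (a + b)) * (a + b)" .
    moreover have "1 / (c * (a + b)) * (a + b) = 1 / c" using ab c by simp
    ultimately show ?thesis by (simp add: a_def b_def)
  qed
  have E: "?A k * (T (Suc k) - T k) = T 1 - real k / c" for k
  proof (induction k)
    case 0 then show ?case using T0 AA_0[OF d, of \<gamma>] by simp
  next
    case (Suc k) then show ?case using step[of k] by (simp add: add_divide_distrib)
  qed
  define e where "e = 1 / (2 * c * (1 + \<gamma>))"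
  have e: "e > 0" using c g by (simp add: e_def)
  define K where "K = nat \<lceil>2 * c * T 1\<rceil> + 1"
  have dec: "T (Suc k) - T k \<le> - e" if "k \<ge> K" for k
  proof -
    define x where "x = real k"
    have x1: "x \<ge> 1" using that by (simp add: K_def x_def)
    have x2: "x \<ge> 2 * c * T 1" using that unfolding K_def x_def by linarith
    have "T 1 \<le> x / (2 * c)" using x2 c by (simp add: pos_le_divide_eq mult.commute)
    then have "T 1 - x / c \<le> - (x / (2 * c))" by simp
    then have E1: "?A k * (T (Suc k) - T k) \<le> - (x / (2 * c))" using E[of k] by (simp add: x_def)
    have Ale: "?A k \<le> 1 + \<gamma> * x" using AA_small[OF g d d2, of k] by (simp add: x_def)
    also have "\<dots> \<le> x * (1 + \<gamma>)" using x1 g by (simp add: algebra_simps)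
    finally have "?A k \<le> x * (1 + \<gamma>)" .
    then have "?A k / (2 * c * (1 + \<gamma>)) \<le> x * (1 + \<gamma>) / (2 * c * (1 + \<gamma>))"
      by (rule divide_right_mono) (use c g in simp_all)
    also have "\<dots> = x / (2 * c)" using g by simp
    finally have "e * ?A k \<le> x / (2 * c)" by (simp add: e_def)
    then have "?A k * (T (Suc k) - T k + e) \<le> 0" using E1 by (simp add: algebra_simps)
    then have "T (Suc k) - T k + e \<le> 0" using a1[of k] by (simp add: mult_le_0_iff)
    then show ?thesis by simp
  qed
  have lin: "T (K + m) \<le> T K - real m * e" for m
  proof (induction m)
    case 0 then show ?case by simp
  next
    case (Suc m)
    have "T (Suc (K + m)) - T (K + m) \<le> - e" by (rule dec) simp
    then show ?case using Suc by (simp add: algebra_simps)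
  qed
  define m where "m = nat \<lceil>T K / e\<rceil> + 1"
  have "real m > T K / e" unfolding m_def by linarith
  then have "real m * e > T K" using e by (simp add: pos_divide_less_eq)
  then have "T (K + m) < 0" using lin[of m] by linarith
  then show False using Tnn[of "K + m"] by simp
qed

theorem lemma4p2:
  fixes \<gamma> l0 :: real and d :: nat
  assumes "\<gamma> > 0" and "d \<ge> 1" and "l0 > 0"
  shows "(d \<le> 2 \<longrightarrow> bd_null_recurrent (bd_lam \<gamma> d l0) (bd_mu \<gamma> d))
       \<and> (d \<ge> 3 \<longrightarrow> bd_transient (bd_lam \<gamma> d l0) (bd_mu \<gamma> d))"
  using recurrent_small[of \<gamma> d l0, OF assms(1,2)] time_unbounded[of \<gamma> d l0, OF assms(1,2)]
    transient_big[of \<gamma> d l0, OF assms(1)]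
  unfolding bd_null_recurrent_def by blast

end
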